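(* Let $k,l,N$ be positive integers and let $\mu_0,\dots,\mu_N$ be proper distributions on $\mathbb{T}^2$. Then the system $$-\partial_1^k\varphi_1=\mu_0,\qquad \partial_2^l\varphi_j-\partial_1^k\varphi_{j+1}=\mu_j\ (j=1,\dots,N-1),\qquad \partial_2^l\varphi_N=\mu_N$$ admits a solution in proper distributions $\varphi_1,\dots,\varphi_N$ if and only if $$\sum_{j=0}^N\partial_1^{jk}\partial_2^{(N-j)l}\mu_j=0.$$ Moreover, if this condition holds, the solution in proper distributions is unique.
   Context: The torus is parametrised by $t\mapsto e^{2\pi it}$; $\partial_1,\partial_2$ are derivatives in the parameters; Fourier coefficients are $\hat f(m,n)$, $(m,n)\in\mathbb{Z}^2$. A distribution $f$ on $\mathbb{T}^2$ is proper if $\hat f(s,t)=0$ whenever $s=0$ or $t=0$. *)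

theory Defs
  imports "HOL-Analysis.Analysis"
begin

text \<open>A distribution on the torus T^2 is represented by its family of Fourier
coefficients (m,n) in Z^2, which are exactly the families of at most polynomial growth.\<close>

type_synonym tdist = "int \<times> int \<Rightarrow> complex"

definition is_distr :: "tdist \<Rightarrow> bool" where
  "is_distr f \<longleftrightarrow> (\<exists>C::real. \<exists>d::nat. \<forall>m n.
      norm (f (m, n)) \<le> C * (1 + \<bar>real_of_int m\<bar> + \<bar>real_of_int n\<bar>) ^ d)"

definition proper :: "tdist \<Rightarrow> bool" where
  "proper f \<longleftrightarrow> (\<forall>s t. s = 0 \<or> t = 0 \<longrightarrow> f (s, t) = 0)"

text \<open>k-th partial derivatives in the first / second parameter (t \<mapsto> e^(2 pi i t)),
acting on Fourier coefficients.\<close>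

definition d1 :: "nat \<Rightarrow> tdist \<Rightarrow> tdist" where
  "d1 k f = (\<lambda>(m, n). (2 * complex_of_real pi * \<i> * of_int m) ^ k * f (m, n))"

definition d2 :: "nat \<Rightarrow> tdist \<Rightarrow> tdist" where
  "d2 l f = (\<lambda>(m, n). (2 * complex_of_real pi * \<i> * of_int n) ^ l * f (m, n))"

definition solves_system :: "nat \<Rightarrow> nat \<Rightarrow> nat \<Rightarrow> (nat \<Rightarrow> tdist) \<Rightarrow> (nat \<Rightarrow> tdist) \<Rightarrow> bool" where
  "solves_system k l N \<mu> \<phi> \<longleftrightarrow>
     (\<forall>x. - d1 k (\<phi> 1) x = \<mu> 0 x) \<and>
     (\<forall>j\<in>{1..N-1}. \<forall>x. d2 l (\<phi> j) x - d1 k (\<phi> (Suc j)) x = \<mu> j x) \<and>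
     d2 l (\<phi> N) = \<mu> N"

definition compat :: "nat \<Rightarrow> nat \<Rightarrow> nat \<Rightarrow> (nat \<Rightarrow> tdist) \<Rightarrow> bool" where
  "compat k l N \<mu> \<longleftrightarrow>
     (\<forall>x. (\<Sum>j=0..N. d1 (j * k) (d2 ((N - j) * l) (\<mu> j)) x) = 0)"

end

theory Submission imports Defs begin

lemma key1:
  fixes a b :: complex and f g :: "nat \<Rightarrow> complex"
  assumes h1: "- (a * f 1) = g 0" and h2: "\<forall>j\<in>{1..N-1}. b * f j - a * f (Suc j) = g j"
  shows "1 \<le> j \<Longrightarrow> j \<le> N \<Longrightarrow> a^j * f j = - (\<Sum>i<j. a^i * b^(j-1-i) * g i)"
proof (induction j)
  case 0 then show ?case by simp
next
  case (Suc j)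
  show ?case
  proof (cases "j = 0")
    case True
    have "a * f 1 = - g 0" using h1 by (metis minus_minus)
    with True show ?thesis by simp
  next
    case False
    then have IH: "a^j * f j = - (\<Sum>i<j. a^i * b^(j-1-i) * g i)" using Suc by simp
    have "b * f j - a * f (Suc j) = g j" using h2 False Suc.prems by auto
    then have eq: "a * f (Suc j) = b * f j - g j" by (simp add: algebra_simps)
    have "a^(Suc j) * f (Suc j) = a^j * (a * f (Suc j))" by (simp add: algebra_simps)
    also have "\<dots> = b * (a^j * f j) - a^j * g j" unfolding eq by (simp add: algebra_simps)
    also have "\<dots> = - (\<Sum>i<j. a^i * (b * b^(j-1-i)) * g i) - a^j * g j"
      using IH by (simp add: sum_distrib_left algebra_simps)
    also have "(\<Sum>i<j. a^i * (b * b^(j-1-i)) * g i) = (\<Sum>i<j. a^i * b^(Suc j-1-i) * g i)"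
    proof (rule sum.cong)
      fix i assume "i \<in> {..<j}"
      then have "Suc j - 1 - i = Suc (j - 1 - i)" by auto
      then show "a^i * (b * b^(j-1-i)) * g i = a^i * b^(Suc j-1-i) * g i" by simp
    qed simp
    finally show ?thesis by simp
  qed
qed

lemma key2:
  fixes a b :: complex and f g :: "nat \<Rightarrow> complex"
  assumes h1: "- (a * f 1) = g 0" and h2: "\<forall>j\<in>{1..N-1}. b * f j - a * f (Suc j) = g j"
    and N: "N > 0"
  shows "(\<Sum>j=0..N. a^j * (b^(N-j) * g j)) = a^N * (g N - b * f N)"
proof -
  obtain M where M: "N = Suc M" using N gr0_conv_Suc by blast
  have fN: "a^N * f N = - (\<Sum>i<N. a^i * b^(N-1-i) * g i)"
    using key1[OF h1 h2, of N] N by simp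
  have "b * (\<Sum>i<N. a^i * b^(N-1-i) * g i) = (\<Sum>i<N. a^i * b^(N-i) * g i)"
    unfolding sum_distrib_left
  proof (rule sum.cong)
    fix i assume "i \<in> {..<N}"
    then have "N - i = Suc (N - 1 - i)" by auto
    then show "b * (a^i * b^(N-1-i) * g i) = a^i * b^(N-i) * g i" by (simp add: algebra_simps)
  qed simp
  moreover have "(\<Sum>j=0..N. a^j * (b^(N-j) * g j)) = (\<Sum>i<N. a^i * b^(N-i) * g i) + a^N * g N"
    unfolding M atLeast0AtMost sum.atMost_Suc lessThan_Suc_atMost[symmetric] by (simp add: algebra_simps)
  ultimately show ?thesis using fN by (simp add: algebra_simps)
qed

lemma distr_mono: assumes "is_distr f" "\<And>x. norm (h x) \<le> norm (f x)" shows "is_distr h"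
  using assms unfolding is_distr_def by (meson order_trans)

lemma base_ge1: "(1::real) \<le> 1 + \<bar>real_of_int m\<bar> + \<bar>real_of_int n\<bar>" by simp

lemma distr_add: assumes "is_distr f" "is_distr g" shows "is_distr (\<lambda>x. f x + g x)"
proof -
  obtain C d where f: "\<forall>m n. norm (f (m, n)) \<le> C * (1 + \<bar>real_of_int m\<bar> + \<bar>real_of_int n\<bar>) ^ d"
    using assms(1) unfolding is_distr_def by blast
  obtain D e where g: "\<forall>m n. norm (g (m, n)) \<le> D * (1 + \<bar>real_of_int m\<bar> + \<bar>real_of_int n\<bar>) ^ e"
    using assms(2) unfolding is_distr_def by blast
  show ?thesis unfolding is_distr_def
  proof (intro exI allI)
    fix m n
    define r where "r = 1 + \<bar>real_of_int m\<bar> + \<bar>real_of_int n\<bar>"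
    have r1: "1 \<le> r" unfolding r_def by simp
    have "C * r^d \<le> \<bar>C\<bar> * r^(d+e)"
      by (rule mult_mono) (use r1 in \<open>auto intro: power_increasing\<close>)
    moreover have "D * r^e \<le> \<bar>D\<bar> * r^(d+e)"
      by (rule mult_mono) (use r1 in \<open>auto intro: power_increasing\<close>)
    moreover have "norm (f (m,n) + g (m,n)) \<le> C * r^d + D * r^e"
      using f g norm_triangle_ineq[of "f (m,n)" "g (m,n)"] unfolding r_def by (smt (verit))
    ultimately show "norm (f (m,n) + g (m,n)) \<le> (\<bar>C\<bar> + \<bar>D\<bar>) * r ^ (d+e)"
      by (simp add: algebra_simps)
  qed
qed

lemma distr_d2: assumes "is_distr f" shows "is_distr (d2 l f)"
proof -
  obtain C d where f: "\<forall>m n. norm (f (m, n)) \<le> C * (1 + \<bar>real_of_int m\<bar> + \<bar>real_of_int n\<bar>) ^ d"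
    using assms(1) unfolding is_distr_def by blast
  show ?thesis unfolding is_distr_def
  proof (intro exI allI)
    fix m n
    define r where "r = 1 + \<bar>real_of_int m\<bar> + \<bar>real_of_int n\<bar>"
    have r1: "1 \<le> r" unfolding r_def by simp
    have nb0: "norm (2 * complex_of_real pi * \<i> * of_int n) = 2 * pi * \<bar>real_of_int n\<bar>"
      by (simp add: norm_mult)
    have "\<bar>real_of_int n\<bar> \<le> r" unfolding r_def by simp
    then have nb: "norm (2 * complex_of_real pi * \<i> * of_int n) \<le> 2 * pi * r"
      unfolding nb0 using pi_gt_zero by simp
    have "norm ((2 * complex_of_real pi * \<i> * of_int n) ^ l) \<le> (2*pi*r)^l"
      unfolding norm_power by (rule power_mono[OF nb]) simp
    have "norm (d2 l f (m,n)) = norm ((2 * complex_of_real pi * \<i> * of_int n) ^ l) * norm (f (m,n))"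
      by (simp add: d2_def norm_mult)
    also have "\<dots> \<le> (2*pi*r)^l * (C * r^d)"
      by (rule mult_mono) (use \<open>norm ((2 * complex_of_real pi * \<i> * of_int n) ^ l) \<le> (2*pi*r)^l\<close> f r_def in auto)
    also have "\<dots> = ((2*pi)^l * C) * r^(l+d)" by (simp add: power_mult_distrib power_add algebra_simps)
    finally show "norm (d2 l f (m,n)) \<le> ((2*pi)^l * C) * r^(l+d)" .
  qed
qed


definition AA :: "nat \<Rightarrow> int \<Rightarrow> complex" where
  "AA k m = (2 * complex_of_real pi * \<i> * of_int m) ^ k"

lemma d1_eq: "d1 k f (m,n) = AA k m * f (m,n)" by (simp add: d1_def AA_def)
lemma d2_eq: "d2 l f (m,n) = AA l n * f (m,n)" by (simp add: d2_def AA_def)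
lemma d1_eq': "d1 (j*k) f (m,n) = AA k m ^ j * f (m,n)"
  unfolding d1_def AA_def power_mult[symmetric] by (simp add: mult.commute)
lemma d2_eq': "d2 ((N-j)*l) f (m,n) = AA l n ^ (N-j) * f (m,n)"
  unfolding d2_def AA_def power_mult[symmetric] by (simp add: mult.commute)

lemma AA_norm: assumes "m \<noteq> 0" shows "1 \<le> norm (AA k m)"
proof -
  have "norm (2 * complex_of_real pi * \<i> * of_int m) = 2 * pi * \<bar>real_of_int m\<bar>"
    by (simp add: norm_mult)
  moreover have "1 \<le> \<bar>real_of_int m\<bar>" using assms by linarith
  moreover have "1 \<le> 2 * pi" using pi_gt3 by simp
  moreover have "1 * \<bar>real_of_int m\<bar> \<le> 2 * pi * \<bar>real_of_int m\<bar>"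
    by (rule mult_right_mono) (use \<open>1 \<le> 2 * pi\<close> in auto)
  ultimately have "1 \<le> norm (2 * complex_of_real pi * \<i> * of_int m)"
    by linarith
  then show ?thesis unfolding AA_def norm_power by (rule one_le_power)
qed

lemma AA_nz: "m \<noteq> 0 \<Longrightarrow> AA k m \<noteq> 0"
  using AA_norm[of m k] by auto

lemma compat_iff: "compat k l N \<mu> \<longleftrightarrow>
  (\<forall>m n. (\<Sum>j=0..N. AA k m ^ j * (AA l n ^ (N-j) * \<mu> j (m,n))) = 0)"
  unfolding compat_def by (auto simp: d1_eq' d2_eq')

lemma solves_iff: "solves_system k l N \<mu> \<phi> \<longleftrightarrow>
  (\<forall>m n. - (AA k m * \<phi> 1 (m,n)) = \<mu> 0 (m,n) \<and>
     (\<forall>j\<in>{1..N-1}. AA l n * \<phi> j (m,n) - AA k m * \<phi> (Suc j) (m,n) = \<mu> j (m,n)) \<and>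
     AA l n * \<phi> N (m,n) = \<mu> N (m,n))" (is "?L \<longleftrightarrow> ?R")
proof
  assume L: ?L
  show ?R
  proof (intro allI conjI ballI)
    fix m n
    show "- (AA k m * \<phi> 1 (m,n)) = \<mu> 0 (m,n)"
      using L unfolding solves_system_def d1_eq[symmetric] by blast
    show "AA l n * \<phi> N (m,n) = \<mu> N (m,n)"
      using L unfolding solves_system_def d2_eq[symmetric] by simp
    fix j assume "j \<in> {1..N-1}"
    then show "AA l n * \<phi> j (m,n) - AA k m * \<phi> (Suc j) (m,n) = \<mu> j (m,n)"
      using L unfolding solves_system_def d1_eq[symmetric] d2_eq[symmetric] by blast
  qed
next
  assume R: ?R
  show ?L unfolding solves_system_def
  proof (intro conjI ballI allI ext)
    fix x :: "int \<times> int" obtain m n where x: "x = (m,n)" by fastforce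
    show "- d1 k (\<phi> 1) x = \<mu> 0 x" using R unfolding x d1_eq by simp
    show "d2 l (\<phi> N) x = \<mu> N x" using R unfolding x d2_eq by simp
    fix j assume "j \<in> {1..N-1}"
    then show "d2 l (\<phi> j) x - d1 k (\<phi> (Suc j)) x = \<mu> j x" using R unfolding x d1_eq d2_eq by simp
  qed
qed

primrec sq :: "complex \<Rightarrow> complex \<Rightarrow> (nat \<Rightarrow> complex) \<Rightarrow> nat \<Rightarrow> complex" where
  "sq a b g 0 = 0"
| "sq a b g (Suc j) = (b * sq a b g j - g j) / a"

theorem lemma5:
  fixes k l N :: nat and \<mu> :: "nat \<Rightarrow> tdist"
  assumes "k > 0" and "l > 0" and "N > 0"
    and "\<forall>j\<in>{0..N}. is_distr (\<mu> j) \<and> proper (\<mu> j)"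
  shows "((\<exists>\<phi>. (\<forall>j\<in>{1..N}. is_distr (\<phi> j) \<and> proper (\<phi> j)) \<and> solves_system k l N \<mu> \<phi>)
          \<longleftrightarrow> compat k l N \<mu>)
       \<and> (compat k l N \<mu> \<longrightarrow>
          (\<forall>\<phi> \<psi>. (\<forall>j\<in>{1..N}. is_distr (\<phi> j) \<and> proper (\<phi> j)) \<and> solves_system k l N \<mu> \<phi>
               \<and> (\<forall>j\<in>{1..N}. is_distr (\<psi> j) \<and> proper (\<psi> j)) \<and> solves_system k l N \<mu> \<psi>
               \<longrightarrow> (\<forall>j\<in>{1..N}. \<phi> j = \<psi> j)))"
proof (intro conjI impI allI iffI)
  have muD: "\<And>j. j \<le> N \<Longrightarrow> is_distr (\<mu> j)" and muP: "\<And>j. j \<le> N \<Longrightarrow> proper (\<mu> j)"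
    using assms(4) by auto
  {
    assume "\<exists>\<phi>. (\<forall>j\<in>{1..N}. is_distr (\<phi> j) \<and> proper (\<phi> j)) \<and> solves_system k l N \<mu> \<phi>"
    then obtain \<phi> where "solves_system k l N \<mu> \<phi>" by blast
    then have S: "\<forall>m n. - (AA k m * \<phi> 1 (m,n)) = \<mu> 0 (m,n) \<and>
     (\<forall>j\<in>{1..N-1}. AA l n * \<phi> j (m,n) - AA k m * \<phi> (Suc j) (m,n) = \<mu> j (m,n)) \<and>
     AA l n * \<phi> N (m,n) = \<mu> N (m,n)" unfolding solves_iff .
    show "compat k l N \<mu>" unfolding compat_iff
    proof (intro allI)
      fix m n
      have "(\<Sum>j=0..N. AA k m ^ j * (AA l n ^ (N-j) * \<mu> j (m,n)))
          = AA k m ^ N * (\<mu> N (m,n) - AA l n * \<phi> N (m,n))"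
        by (rule key2[where f = "\<lambda>j. \<phi> j (m,n)" and g = "\<lambda>j. \<mu> j (m,n)"])
           (use S assms(3) in auto)
      then show "(\<Sum>j=0..N. AA k m ^ j * (AA l n ^ (N-j) * \<mu> j (m,n))) = 0" using S by simp
    qed
  }
  {
    assume C: "compat k l N \<mu>"
    define \<phi> where "\<phi> = (\<lambda>j (x::int\<times>int). case x of (m,n) \<Rightarrow>
       if m \<noteq> 0 \<and> n \<noteq> 0 then sq (AA k m) (AA l n) (\<lambda>i. \<mu> i (m,n)) j else 0)"
    have phi0: "\<phi> j (m,n) = 0" if "m = 0 \<or> n = 0" for j m n
      using that unfolding \<phi>_def by auto
    have phi1: "\<phi> j (m,n) = sq (AA k m) (AA l n) (\<lambda>i. \<mu> i (m,n)) j" if "m \<noteq> 0" "n \<noteq> 0" for j m n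
      using that unfolding \<phi>_def by auto
    have mu0: "\<mu> j (m,n) = 0" if "m = 0 \<or> n = 0" "j \<le> N" for j m n
      using muP[OF that(2)] that(1) unfolding proper_def by auto
    have D: "j \<le> N \<longrightarrow> is_distr (\<phi> j)" for j
    proof (induction j)
      case 0
      have "\<phi> 0 = (\<lambda>x. 0)" unfolding \<phi>_def by auto
      then show ?case unfolding is_distr_def by (auto intro!: exI[of _ 0])
    next
      case (Suc j)
      show ?case
      proof
        assume jN: "Suc j \<le> N"
        then have "is_distr (\<phi> j)" using Suc by simp
        have "is_distr (\<lambda>x. d2 l (\<phi> j) x + - \<mu> j x)"
        proof (rule distr_add)
          show "is_distr (d2 l (\<phi> j))" by (rule distr_d2) fact
          show "is_distr (\<lambda>x. - \<mu> j x)" by (rule distr_mono[OF muD[of j]]) (use jN in auto)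
        qed
        then show "is_distr (\<phi> (Suc j))"
        proof (rule distr_mono)
          fix x :: "int \<times> int" obtain m n where x: "x = (m,n)" by fastforce
          show "norm (\<phi> (Suc j) x) \<le> norm (d2 l (\<phi> j) x + - \<mu> j x)"
          proof (cases "m \<noteq> 0 \<and> n \<noteq> 0")
            case True
            have "norm (\<phi> (Suc j) x) = norm (d2 l (\<phi> j) x + - \<mu> j x) / norm (AA k m)"
              using True unfolding x d2_eq phi1[OF conjunct1[OF True] conjunct2[OF True]]
              by (simp add: norm_divide)
            also have "\<dots> \<le> norm (d2 l (\<phi> j) x + - \<mu> j x)"
              using divide_left_mono[of 1 "norm (AA k m)" "norm (d2 l (\<phi> j) x + - \<mu> j x)"]
                AA_norm[of m k] True AA_nz[of m k] by simp
            finally show ?thesis .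
          next
            case False
            then show ?thesis unfolding x using phi0 by simp
          qed
        qed
      qed
    qed
    have Sol: "solves_system k l N \<mu> \<phi>" unfolding solves_iff
    proof (intro allI)
      fix m n
      show "- (AA k m * \<phi> 1 (m,n)) = \<mu> 0 (m,n) \<and>
     (\<forall>j\<in>{1..N-1}. AA l n * \<phi> j (m,n) - AA k m * \<phi> (Suc j) (m,n) = \<mu> j (m,n)) \<and>
     AA l n * \<phi> N (m,n) = \<mu> N (m,n)"
      proof (cases "m \<noteq> 0 \<and> n \<noteq> 0")
        case False
        then show ?thesis using phi0 mu0 by auto
      next
        case True
        have nz: "AA k m \<noteq> 0" using True AA_nz by auto
        have E1: "- (AA k m * \<phi> 1 (m,n)) = \<mu> 0 (m,n)"
          using True nz by (simp add: phi1)
        have E2: "\<forall>j\<in>{1..N-1}. AA l n * \<phi> j (m,n) - AA k m * \<phi> (Suc j) (m,n) = \<mu> j (m,n)"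
          using True nz by (simp add: phi1)
        have "(\<Sum>j=0..N. AA k m ^ j * (AA l n ^ (N-j) * \<mu> j (m,n)))
          = AA k m ^ N * (\<mu> N (m,n) - AA l n * \<phi> N (m,n))"
          by (rule key2[where f = "\<lambda>j. \<phi> j (m,n)" and g = "\<lambda>j. \<mu> j (m,n)"])
             (use E1 E2 assms(3) in auto)
        then have "AA k m ^ N * (\<mu> N (m,n) - AA l n * \<phi> N (m,n)) = 0"
          using C unfolding compat_iff by simp
        then have E3: "AA l n * \<phi> N (m,n) = \<mu> N (m,n)" using nz by simp
        show ?thesis using E1 E2 E3 by blast
      qed
    qed
    have "\<forall>j\<in>{1..N}. is_distr (\<phi> j) \<and> proper (\<phi> j)"
      using D phi0 unfolding proper_def by auto
    then show "\<exists>\<phi>. (\<forall>j\<in>{1..N}. is_distr (\<phi> j) \<and> proper (\<phi> j)) \<and> solves_system k l N \<mu> \<phi>"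
      using Sol by blast
  }
  fix \<phi> \<psi>
  assume H: "(\<forall>j\<in>{1..N}. is_distr (\<phi> j) \<and> proper (\<phi> j)) \<and> solves_system k l N \<mu> \<phi>
               \<and> (\<forall>j\<in>{1..N}. is_distr (\<psi> j) \<and> proper (\<psi> j)) \<and> solves_system k l N \<mu> \<psi>"
  then have S1: "\<forall>m n. - (AA k m * \<phi> 1 (m,n)) = \<mu> 0 (m,n) \<and>
     (\<forall>j\<in>{1..N-1}. AA l n * \<phi> j (m,n) - AA k m * \<phi> (Suc j) (m,n) = \<mu> j (m,n))"
   and S2: "\<forall>m n. - (AA k m * \<psi> 1 (m,n)) = \<mu> 0 (m,n) \<and>
     (\<forall>j\<in>{1..N-1}. AA l n * \<psi> j (m,n) - AA k m * \<psi> (Suc j) (m,n) = \<mu> j (m,n))"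
    unfolding solves_iff by blast+
  have P: "\<phi> j (m,n) = 0 \<and> \<psi> j (m,n) = 0" if "m = 0" "j \<in> {1..N}" for j m n
    using H that unfolding proper_def by auto
  have eq: "1 \<le> j \<longrightarrow> j \<le> N \<longrightarrow> \<phi> j (m,n) = \<psi> j (m,n)" for j m n
  proof (cases "m = 0")
    case True then show ?thesis using P by auto
  next
    case False
    then have nz: "AA k m \<noteq> 0" by (rule AA_nz)
    show ?thesis
    proof (induction j)
      case 0 then show ?case by simp
    next
      case (Suc j)
      show ?case
      proof (intro impI)
        assume "1 \<le> Suc j" "Suc j \<le> N"
        show "\<phi> (Suc j) (m,n) = \<psi> (Suc j) (m,n)"
        proof (cases "j = 0")
          case True
          have "- (AA k m * \<phi> 1 (m,n)) = - (AA k m * \<psi> 1 (m,n))" using S1 S2 by simp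
          then have "AA k m * \<phi> 1 (m,n) = AA k m * \<psi> 1 (m,n)" by simp
          then show ?thesis using nz True by simp
        next
          case False
          then have jj: "j \<in> {1..N-1}" using \<open>Suc j \<le> N\<close> by auto
          have ej: "\<phi> j (m,n) = \<psi> j (m,n)" using Suc False \<open>Suc j \<le> N\<close> by simp
          have "AA k m * \<phi> (Suc j) (m,n) = AA k m * \<psi> (Suc j) (m,n)"
          proof -
            have "AA l n * \<phi> j (m,n) - AA k m * \<phi> (Suc j) (m,n) = AA l n * \<psi> j (m,n) - AA k m * \<psi> (Suc j) (m,n)"
              using S1 S2 jj by simp
            then show ?thesis using ej by simp
          qed
          then show ?thesis using nz by simp
        qed
      qed
    qed
  qed
  show "\<forall>j\<in>{1..N}. \<phi> j = \<psi> j"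
  proof
    fix j assume "j \<in> {1..N}"
    then show "\<phi> j = \<psi> j" using eq by (auto intro!: ext)
  qed
qed
end
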